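(* Let $\mathbb{X}$ be a real reflexive Kadets-Klee Banach space and $\mathbb{Y}$ a real normed linear space, and let $T\in\mathbb{K}(\mathbb{X},\mathbb{Y})$. Then $T$ is a smooth point of $\mathbb{B}(\mathbb{X},\mathbb{Y})$ if and only if $T$ is a smooth point of $\mathbb{K}(\mathbb{X},\mathbb{Y})$.
   Context: $\mathbb{B}(\mathbb{X},\mathbb{Y})$ and its subspace $\mathbb{K}(\mathbb{X},\mathbb{Y})$ of compact operators carry the operator norm. A nonzero element $x$ of a normed space $\mathbb{Z}$ is smooth if there is a unique $f\in\mathbb{Z}^*$ with $\|f\|=1$ and $f(x)=\|x\|$. A normed space $\mathbb{X}$ is Kadets-Klee if whenever $x_n\to x$ weakly and $\|x_n\|\to\|x\|$, then $\|x_n-x\|\to0$. *)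

theory Defs
  imports "HOL-Analysis.Analysis"
begin

definition reflexive_space :: "'a::real_normed_vector itself \<Rightarrow> bool" where
  "reflexive_space _ \<longleftrightarrow>
     (\<forall>\<phi> :: ('a \<Rightarrow>\<^sub>L real) \<Rightarrow>\<^sub>L real. \<exists>x::'a. \<forall>f. blinfun_apply \<phi> f = blinfun_apply f x)"

definition weakly_converges :: "(nat \<Rightarrow> 'a::real_normed_vector) \<Rightarrow> 'a \<Rightarrow> bool" where
  "weakly_converges xs x \<longleftrightarrow>
     (\<forall>f :: 'a \<Rightarrow>\<^sub>L real. (\<lambda>n. blinfun_apply f (xs n)) \<longlonglongrightarrow> blinfun_apply f x)"

definition kadets_klee :: "'a::real_normed_vector itself \<Rightarrow> bool" where
  "kadets_klee _ \<longleftrightarrow>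
     (\<forall>(xs :: nat \<Rightarrow> 'a) x. weakly_converges xs x \<and> (\<lambda>n. norm (xs n)) \<longlonglongrightarrow> norm x
        \<longrightarrow> (\<lambda>n. norm (xs n - x)) \<longlonglongrightarrow> 0)"

definition compact_operators :: "('a::real_normed_vector \<Rightarrow>\<^sub>L 'b::real_normed_vector) set" where
  "compact_operators = {T. compact (closure (blinfun_apply T ` cball 0 1))}"

text \<open>A norm-one continuous linear functional on a linear subspace S of a normed space,
  represented as a function on the whole space that vanishes outside S (so that
  functionals on S correspond one-to-one to such functions).\<close>
definition unit_functional_on :: "'z::real_normed_vector set \<Rightarrow> ('z \<Rightarrow> real) \<Rightarrow> bool" where
  "unit_functional_on S f \<longleftrightarrow>
     (\<forall>x\<in>S. \<forall>y\<in>S. f (x + y) = f x + f y) \<and>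
     (\<forall>c. \<forall>x\<in>S. f (c *\<^sub>R x) = c * f x) \<and>
     (\<forall>x\<in>S. \<bar>f x\<bar> \<le> norm x) \<and>
     (\<forall>e>0. \<exists>x\<in>S. norm x \<le> 1 \<and> \<bar>f x\<bar> > 1 - e) \<and>
     (\<forall>x. x \<notin> S \<longrightarrow> f x = 0)"

definition smooth_point_in :: "'z::real_normed_vector set \<Rightarrow> 'z \<Rightarrow> bool" where
  "smooth_point_in S x \<longleftrightarrow> x \<in> S \<and> x \<noteq> 0 \<and>
     (\<exists>!f. unit_functional_on S f \<and> f x = norm x)"

end

theory Submission
  imports Defs
begin


definition lin_on :: "'v::real_vector set \<Rightarrow> ('v \<Rightarrow> real) \<Rightarrow> bool" where
  "lin_on M f \<longleftrightarrow> (\<forall>x\<in>M. \<forall>y\<in>M. f (x + y) = f x + f y) \<and> (\<forall>c. \<forall>x\<in>M. f (c *\<^sub>R x) = c * f x)"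

definition subsp :: "'v::real_vector set \<Rightarrow> bool" where
  "subsp M \<longleftrightarrow> 0 \<in> M \<and> (\<forall>x\<in>M. \<forall>y\<in>M. x + y \<in> M) \<and> (\<forall>c. \<forall>x\<in>M. c *\<^sub>R x \<in> M)"

definition sublin :: "('v::real_vector \<Rightarrow> real) \<Rightarrow> bool" where
  "sublin p \<longleftrightarrow> (\<forall>x y. p (x + y) \<le> p x + p y) \<and> (\<forall>c\<ge>0. \<forall>x. p (c *\<^sub>R x) = c * p x)"

definition goodG :: "'v::real_vector set \<Rightarrow> ('v \<Rightarrow> real) \<Rightarrow> ('v \<Rightarrow> real) \<Rightarrow> ('v \<times> real) set \<Rightarrow> bool" where
  "goodG M f p G \<longleftrightarrow> (\<forall>x a b. (x,a) \<in> G \<longrightarrow> (x,b) \<in> G \<longrightarrow> a = b) \<and>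
     (\<forall>x a y b. (x,a) \<in> G \<longrightarrow> (y,b) \<in> G \<longrightarrow> (x+y, a+b) \<in> G) \<and>
     (\<forall>x a c. (x,a) \<in> G \<longrightarrow> (c *\<^sub>R x, c * a) \<in> G) \<and>
     (\<forall>x\<in>M. (x, f x) \<in> G) \<and> (\<forall>x a. (x,a) \<in> G \<longrightarrow> a \<le> p x)"

lemma HB_step:
  fixes G :: "('v::real_vector \<times> real) set"
  assumes g: "goodG M f p G" and p: "sublin p" and M: "subsp M"
    and x0: "\<forall>a. (x0, a) \<notin> G"
  shows "\<exists>G'. goodG M f p G' \<and> G \<subseteq> G' \<and> G \<noteq> G'"
proof -
  have gfun: "\<And>x a b. (x,a) \<in> G \<Longrightarrow> (x,b) \<in> G \<Longrightarrow> a = b"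
    and add: "\<And>x a y b. (x,a) \<in> G \<Longrightarrow> (y,b) \<in> G \<Longrightarrow> (x+y, a+b) \<in> G"
    and scl: "\<And>x a c. (x,a) \<in> G \<Longrightarrow> (c *\<^sub>R x, c * a) \<in> G"
    and ext: "\<And>x. x \<in> M \<Longrightarrow> (x, f x) \<in> G"
    and bnd: "\<And>x a. (x,a) \<in> G \<Longrightarrow> a \<le> p x"
    using g unfolding goodG_def by blast+
  have padd: "\<And>x y. p (x + y) \<le> p x + p y" and phom: "\<And>c x. c \<ge> 0 \<Longrightarrow> p (c *\<^sub>R x) = c * p x"
    using p unfolding sublin_def by blast+
  have "0 \<in> M" using M unfolding subsp_def by blast
  then have G0: "(0, f 0) \<in> G" by (rule ext)
  define L where "L = {a - p (h - x0) | h a. (h,a) \<in> G}"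
  define c where "c = Sup L"
  have key: "a - p (h - x0) \<le> p (k + x0) - b" if "(h,a) \<in> G" "(k,b) \<in> G" for h a k b
  proof -
    have "a + b \<le> p (h + k)" using bnd[OF add[OF that]] .
    also have "h + k = (h - x0) + (k + x0)" by simp
    finally have "a + b \<le> p ((h - x0) + (k + x0))" .
    then show ?thesis using padd[of "h - x0" "k + x0"] by simp
  qed
  have Lne: "L \<noteq> {}" using G0 unfolding L_def by blast
  have Lbdd: "bdd_above L" unfolding bdd_above_def L_def using key[OF _ G0] by blast
  have c1: "a - p (h - x0) \<le> c" if "(h,a) \<in> G" for h a
    unfolding c_def by (rule cSup_upper[OF _ Lbdd]) (use that L_def in blast)
  have c2: "c \<le> p (k + x0) - b" if "(k,b) \<in> G" for k b
    unfolding c_def by (rule cSup_least[OF Lne]) (use key[OF _ that] L_def in blast)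
  define G' where "G' = {(h + t *\<^sub>R x0, a + t * c) | h a t. (h,a) \<in> G}"
  have memG': "(x,a) \<in> G' \<longleftrightarrow> (\<exists>h a1 t. (h,a1) \<in> G \<and> x = h + t *\<^sub>R x0 \<and> a = a1 + t * c)" for x a
    unfolding G'_def by blast
  have sub: "G \<subseteq> G'"
  proof
    fix z assume "z \<in> G" then obtain h a where "z = (h,a)" "(h,a) \<in> G" by (cases z) auto
    then have "z = (h + 0 *\<^sub>R x0, a + 0 * c)" by simp
    then show "z \<in> G'" unfolding G'_def using \<open>(h,a) \<in> G\<close> by blast
  qed
  have neq: "G \<noteq> G'"
  proof
    assume "G = G'"
    have "(0 + 1 *\<^sub>R x0, f 0 + 1 * c) \<in> G'" unfolding G'_def using G0 by blast
    then show False using x0 \<open>G = G'\<close> by simp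
  qed
  have uniq: "t = t' \<and> h = h'" if "(h,a) \<in> G" "(h',a') \<in> G" "h + t *\<^sub>R x0 = h' + t' *\<^sub>R x0" for h a h' a' t t'
  proof (cases "t = t'")
    case True then show ?thesis using that by simp
  next
    case False
    have "(h + (-1) *\<^sub>R h', a + (-1) * a') \<in> G" using add[OF that(1) scl[OF that(2)]] .
    then have "((1 / (t' - t)) *\<^sub>R (h + (-1) *\<^sub>R h'), (1 / (t' - t)) * (a + (-1) * a')) \<in> G" by (rule scl)
    moreover have "(1 / (t' - t)) *\<^sub>R (h + (-1) *\<^sub>R h') = x0"
    proof -
      have e: "h + (-1) *\<^sub>R h' = (t' - t) *\<^sub>R x0" using that(3) by (simp add: algebra_simps)
      have "(1 / (t' - t)) *\<^sub>R (h + (-1) *\<^sub>R h') = (1 / (t' - t)) *\<^sub>R ((t' - t) *\<^sub>R x0)"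
        by (simp only: e)
      also have "\<dots> = x0" using False by simp
      finally show ?thesis .
    qed
    ultimately show ?thesis using x0 by auto
  qed
  have "goodG M f p G'"
    unfolding goodG_def
  proof (intro conjI allI impI ballI)
    fix x a b assume "(x,a) \<in> G'" "(x,b) \<in> G'"
    then obtain h1 a1 t1 h2 a2 t2 where "(h1,a1) \<in> G" "(h2,a2) \<in> G" "x = h1 + t1 *\<^sub>R x0" "a = a1 + t1 * c"
      "x = h2 + t2 *\<^sub>R x0" "b = a2 + t2 * c" using memG' by metis
    then show "a = b" using uniq[of h1 a1 h2 a2 t1 t2] gfun by auto
  next
    fix x a y b assume "(x,a) \<in> G'" "(y,b) \<in> G'"
    then obtain h1 a1 t1 h2 a2 t2 where "(h1,a1) \<in> G" "(h2,a2) \<in> G" "x = h1 + t1 *\<^sub>R x0" "a = a1 + t1 * c"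
      "y = h2 + t2 *\<^sub>R x0" "b = a2 + t2 * c" using memG' by metis
    then have "(h1 + h2, a1 + a2) \<in> G" "x + y = (h1 + h2) + (t1 + t2) *\<^sub>R x0"
       "a + b = (a1 + a2) + (t1 + t2) * c" using add by (auto simp: algebra_simps)
    then show "(x + y, a + b) \<in> G'" using memG' by blast
  next
    fix x a d assume "(x,a) \<in> G'"
    then obtain h1 a1 t1 where "(h1,a1) \<in> G" "x = h1 + t1 *\<^sub>R x0" "a = a1 + t1 * c"
      using memG' by metis
    then have "(d *\<^sub>R h1, d * a1) \<in> G" "d *\<^sub>R x = d *\<^sub>R h1 + (d * t1) *\<^sub>R x0"
       "d * a = d * a1 + (d * t1) * c" using scl by (auto simp: algebra_simps)
    then show "(d *\<^sub>R x, d * a) \<in> G'" using memG' by blast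
  next
    fix x assume "x \<in> M" then show "(x, f x) \<in> G'" using sub ext by blast
  next
    fix x a assume "(x,a) \<in> G'"
    then obtain h a1 t where h: "(h,a1) \<in> G" and xa: "x = h + t *\<^sub>R x0" "a = a1 + t * c"
      using memG' by metis
    show "a \<le> p x"
    proof (cases "t = 0")
      case True then show ?thesis using bnd[OF h] xa by simp
    next
      case False
      show ?thesis
      proof (cases "t > 0")
        case True
        have hh: "((1/t) *\<^sub>R h, (1/t) * a1) \<in> G" using scl[OF h] .
        have "c \<le> p ((1/t) *\<^sub>R h + x0) - (1/t) * a1" using c2[OF hh] .
        then have "t * c \<le> t * (p ((1/t) *\<^sub>R h + x0) - (1/t) * a1)" using True by simp
        also have "\<dots> = p (t *\<^sub>R ((1/t) *\<^sub>R h + x0)) - a1"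
          using True phom[of t "(1/t) *\<^sub>R h + x0"] by (simp add: right_diff_distrib)
        also have "t *\<^sub>R ((1/t) *\<^sub>R h + x0) = x" using True xa by (simp add: algebra_simps)
        finally show ?thesis using xa by simp
      next
        case False
        with \<open>t \<noteq> 0\<close> have tn: "t < 0" by simp
        define s where "s = - t"
        have s: "s > 0" using tn s_def by simp
        have hh: "((1/s) *\<^sub>R h, (1/s) * a1) \<in> G" using scl[OF h] .
        have "(1/s) * a1 - p ((1/s) *\<^sub>R h - x0) \<le> c" using c1[OF hh] .
        then have "s * ((1/s) * a1 - p ((1/s) *\<^sub>R h - x0)) \<le> s * c" using s by simp
        then have "a1 - p (s *\<^sub>R ((1/s) *\<^sub>R h - x0)) \<le> s * c"
          using s phom[of s "(1/s) *\<^sub>R h - x0"] by (simp add: right_diff_distrib)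
        moreover have "s *\<^sub>R ((1/s) *\<^sub>R h - x0) = x" using s xa s_def by (simp add: algebra_simps)
        ultimately show ?thesis using xa s_def by simp
      qed
    qed
  qed
  then show ?thesis using sub neq by blast
qed

theorem HB:
  fixes p :: "'v::real_vector \<Rightarrow> real"
  assumes p: "sublin p" and M: "subsp M" and f: "lin_on M f" and fb: "\<forall>x\<in>M. f x \<le> p x"
  shows "\<exists>F. lin_on UNIV F \<and> (\<forall>x\<in>M. F x = f x) \<and> (\<forall>x. F x \<le> p x)"
proof -
  define A where "A = {G. goodG M f p G}"
  define G0 where "G0 = {(x, f x) | x. x \<in> M}"
  have fadd: "\<And>x y. x \<in> M \<Longrightarrow> y \<in> M \<Longrightarrow> f (x + y) = f x + f y"
    and fscl: "\<And>c x. x \<in> M \<Longrightarrow> f (c *\<^sub>R x) = c * f x" using f unfolding lin_on_def by blast+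
  have Madd: "\<And>x y. x \<in> M \<Longrightarrow> y \<in> M \<Longrightarrow> x + y \<in> M"
    and Mscl: "\<And>c x. x \<in> M \<Longrightarrow> c *\<^sub>R x \<in> M" using M unfolding subsp_def by blast+
  have G0A: "G0 \<in> A" unfolding A_def goodG_def G0_def
    using fadd fscl Madd Mscl fb by auto
  have "\<exists>U\<in>A. \<forall>X\<in>C. X \<subseteq> U" if C: "C \<in> chains A" for C
  proof (cases "C = {}")
    case True then show ?thesis using G0A by blast
  next
    case False
    have CA: "\<And>G. G \<in> C \<Longrightarrow> goodG M f p G" using chainsD2[OF C] unfolding A_def by blast
    have cmp: "\<And>G1 G2. G1 \<in> C \<Longrightarrow> G2 \<in> C \<Longrightarrow> G1 \<subseteq> G2 \<or> G2 \<subseteq> G1" using chainsD[OF C] by blast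
    have two: "\<exists>G\<in>C. u \<in> G \<and> v \<in> G" if "u \<in> \<Union>C" "v \<in> \<Union>C" for u v
      using that cmp by blast
    obtain G1 where G1: "G1 \<in> C" using False by blast
    have "goodG M f p (\<Union>C)"
      unfolding goodG_def
    proof (intro conjI allI impI ballI)
      fix x a b assume "(x,a) \<in> \<Union>C" "(x,b) \<in> \<Union>C"
      then obtain G where "G \<in> C" "(x,a) \<in> G" "(x,b) \<in> G" using two by blast
      then show "a = b" using CA unfolding goodG_def by blast
    next
      fix x a y b assume "(x,a) \<in> \<Union>C" "(y,b) \<in> \<Union>C"
      then obtain G where "G \<in> C" "(x,a) \<in> G" "(y,b) \<in> G" using two by blast
      then show "(x+y, a+b) \<in> \<Union>C" using CA unfolding goodG_def by blast
    next
      fix x a c assume "(x,a) \<in> \<Union>C"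
      then obtain G where "G \<in> C" "(x,a) \<in> G" by blast
      then show "(c *\<^sub>R x, c * a) \<in> \<Union>C" using CA unfolding goodG_def by blast
    next
      fix x assume "x \<in> M" then show "(x, f x) \<in> \<Union>C" using G1 CA unfolding goodG_def by blast
    next
      fix x a assume "(x,a) \<in> \<Union>C"
      then obtain G where "G \<in> C" "(x,a) \<in> G" by blast
      then show "a \<le> p x" using CA unfolding goodG_def by blast
    qed
    then show ?thesis unfolding A_def by blast
  qed
  then obtain Gm where GmA: "Gm \<in> A" and max: "\<forall>X\<in>A. Gm \<subseteq> X \<longrightarrow> X = Gm"
    using Zorn_Lemma2[of A] by blast
  have g: "goodG M f p Gm" using GmA unfolding A_def by blast
  have tot: "\<exists>a. (x,a) \<in> Gm" for x
  proof (rule ccontr)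
    assume "\<nexists>a. (x, a) \<in> Gm"
    then obtain G' where "goodG M f p G'" "Gm \<subseteq> G'" "Gm \<noteq> G'" using HB_step[OF g p M] by blast
    then show False using max unfolding A_def by blast
  qed
  have gfun: "\<And>x a b. (x,a) \<in> Gm \<Longrightarrow> (x,b) \<in> Gm \<Longrightarrow> a = b"
    and gadd: "\<And>x a y b. (x,a) \<in> Gm \<Longrightarrow> (y,b) \<in> Gm \<Longrightarrow> (x+y, a+b) \<in> Gm"
    and gscl: "\<And>x a c. (x,a) \<in> Gm \<Longrightarrow> (c *\<^sub>R x, c * a) \<in> Gm"
    and gext: "\<And>x. x \<in> M \<Longrightarrow> (x, f x) \<in> Gm"
    and gbnd: "\<And>x a. (x,a) \<in> Gm \<Longrightarrow> a \<le> p x"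
    using g unfolding goodG_def by blast+
  define F where "F x = (THE a. (x,a) \<in> Gm)" for x
  have FG: "(x, F x) \<in> Gm" for x
    unfolding F_def using tot[of x] gfun by (metis theI)
  have Fe: "F x = a" if "(x,a) \<in> Gm" for x a using gfun[OF FG that] .
  show ?thesis
  proof (intro exI conjI)
    show "lin_on UNIV F" unfolding lin_on_def
      using Fe[OF gadd[OF FG FG]] Fe[OF gscl[OF FG]] by auto
    show "\<forall>x\<in>M. F x = f x" using Fe gext by blast
    show "\<forall>x. F x \<le> p x" using gbnd FG by blast
  qed
qed



lemma lin_on_UNIV_bl:
  fixes F :: "'v::real_normed_vector \<Rightarrow> real"
  assumes "lin_on UNIV F" "\<And>x. \<bar>F x\<bar> \<le> C * norm x"
  shows "bounded_linear F"
proof (rule bounded_linear_intro[where K = C])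
  show "F (x + y) = F x + F y" for x y using assms(1) unfolding lin_on_def by blast
  show "F (r *\<^sub>R x) = r *\<^sub>R F x" for r x using assms(1) unfolding lin_on_def by simp
  show "norm (F x) \<le> norm x * C" for x using assms(2)[of x] by (simp add: mult.commute)
qed

lemma HB_norm:
  fixes f :: "'v::real_normed_vector \<Rightarrow> real"
  assumes M: "subsp M" and f: "lin_on M f" and C: "C \<ge> 0" and fb: "\<forall>x\<in>M. f x \<le> C * norm x"
  shows "\<exists>F. lin_on UNIV F \<and> (\<forall>x\<in>M. F x = f x) \<and> (\<forall>x. \<bar>F x\<bar> \<le> C * norm x)"
proof -
  have "C * norm (x + y) \<le> C * norm x + C * norm y" for x y :: 'v
  proof -
    have "C * norm (x + y) \<le> C * (norm x + norm y)" using C norm_triangle_ineq by (rule mult_left_mono[rotated])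
    then show ?thesis by (simp add: distrib_left)
  qed
  then have p: "sublin (\<lambda>x::'v. C * norm x)" unfolding sublin_def by simp
  obtain F where F: "lin_on UNIV F" "\<forall>x\<in>M. F x = f x" "\<forall>x. F x \<le> C * norm x"
    using HB[OF p M f fb] by blast
  have "\<bar>F x\<bar> \<le> C * norm x" for x
  proof -
    have "F ((-1) *\<^sub>R x) = (-1) * F x" using F(1) unfolding lin_on_def by blast
    then have "F (-x) = - F x" by simp
    then show ?thesis using F(3)[rule_format, of x] F(3)[rule_format, of "-x"] by simp
  qed
  then show ?thesis using F by blast
qed

lemma support_fun:
  fixes y :: "'v::real_normed_vector"
  assumes "y \<noteq> 0"
  shows "\<exists>g::'v \<Rightarrow>\<^sub>L real. blinfun_apply g y = norm y \<and> (\<forall>x. \<bar>blinfun_apply g x\<bar> \<le> norm x) \<and> norm g \<le> 1"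
proof -
  define M where "M = range (\<lambda>a. a *\<^sub>R y)"
  define f where "f z = (THE a. z = a *\<^sub>R y) * norm y" for z
  have fa: "f (a *\<^sub>R y) = a * norm y" for a
  proof -
    have "(THE b. a *\<^sub>R y = b *\<^sub>R y) = a" using assms by (intro the_equality) auto
    then show ?thesis unfolding f_def by simp
  qed
  have M: "subsp M" unfolding subsp_def M_def
  proof (intro conjI ballI allI)
    show "0 \<in> range (\<lambda>a. a *\<^sub>R y)" by (rule image_eqI[of _ _ 0]) auto
    fix u v assume "u \<in> range (\<lambda>a. a *\<^sub>R y)" "v \<in> range (\<lambda>a. a *\<^sub>R y)"
    then obtain a b where "u = a *\<^sub>R y" "v = b *\<^sub>R y" by blast
    then show "u + v \<in> range (\<lambda>a. a *\<^sub>R y)" by (intro image_eqI[of _ _ "a + b"]) (simp_all add: scaleR_add_left)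
  next
    fix c u assume "u \<in> range (\<lambda>a. a *\<^sub>R y)"
    then obtain a where "u = a *\<^sub>R y" by blast
    then show "c *\<^sub>R u \<in> range (\<lambda>a. a *\<^sub>R y)" by (intro image_eqI[of _ _ "c * a"]) simp_all
  qed
  have lin: "lin_on M f" unfolding lin_on_def M_def
  proof (intro conjI ballI allI)
    fix u v assume "u \<in> range (\<lambda>a. a *\<^sub>R y)" "v \<in> range (\<lambda>a. a *\<^sub>R y)"
    then obtain a b where "u = a *\<^sub>R y" "v = b *\<^sub>R y" by blast
    then show "f (u + v) = f u + f v" using fa[of "a+b"] fa[of a] fa[of b] by (simp add: scaleR_add_left[symmetric] distrib_right)
  next
    fix c u assume "u \<in> range (\<lambda>a. a *\<^sub>R y)"
    then obtain a where "u = a *\<^sub>R y" by blast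
    then show "f (c *\<^sub>R u) = c * f u" using fa[of "c*a"] fa[of a] by simp
  qed
  have fb: "\<forall>x\<in>M. f x \<le> 1 * norm x" unfolding M_def by (auto simp: fa intro!: mult_right_mono)
  obtain F where F: "lin_on UNIV F" "\<forall>x\<in>M. F x = f x" "\<forall>x. \<bar>F x\<bar> \<le> 1 * norm x"
    using HB_norm[OF M lin _ fb] by auto
  have bl: "bounded_linear F" using lin_on_UNIV_bl[OF F(1)] F(3) by blast
  have Fy: "F y = norm y" using F(2) fa[of 1] unfolding M_def by (metis rangeI scaleR_one mult_1 mult.commute)
  show ?thesis
    apply (rule exI[of _ "Blinfun F"])
    using F(3) Fy by (auto simp: bounded_linear_Blinfun_apply[OF bl] intro!: norm_blinfun_bound)
qed

lemma separate:
  fixes x y :: "'v::real_normed_vector"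
  assumes "\<And>g::'v \<Rightarrow>\<^sub>L real. blinfun_apply g x = blinfun_apply g y"
  shows "x = y"
proof (rule ccontr)
  assume "x \<noteq> y"
  then obtain g :: "'v \<Rightarrow>\<^sub>L real" where "blinfun_apply g (x - y) = norm (x - y)" using support_fun[of "x - y"] by auto
  then show False using assms[of g] \<open>x \<noteq> y\<close> by (simp add: blinfun.diff_right)
qed

lemma UF_intro:
  fixes f :: "'v::real_normed_vector \<Rightarrow> real"
  assumes S: "subsp S" and lin: "lin_on S f" and b: "\<forall>x\<in>S. \<bar>f x\<bar> \<le> norm x"
    and out: "\<forall>x. x \<notin> S \<longrightarrow> f x = 0" and z: "z \<in> S" "z \<noteq> 0" "f z = norm z"
  shows "unit_functional_on S f"
  unfolding unit_functional_on_def
proof (intro conjI)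
  show "\<forall>x\<in>S. \<forall>y\<in>S. f (x + y) = f x + f y" "\<forall>c. \<forall>x\<in>S. f (c *\<^sub>R x) = c * f x"
    using lin unfolding lin_on_def by blast+
  show "\<forall>x\<in>S. \<bar>f x\<bar> \<le> norm x" "\<forall>x. x \<notin> S \<longrightarrow> f x = 0" using b out by blast+
  show "\<forall>e>0. \<exists>x\<in>S. norm x \<le> 1 \<and> 1 - e < \<bar>f x\<bar>"
  proof (intro allI impI)
    fix e :: real assume "e > 0"
    define x where "x = (1 / norm z) *\<^sub>R z"
    have "x \<in> S" using S z unfolding subsp_def x_def by blast
    moreover have "norm x = 1" using z by (simp add: x_def)
    moreover have "f x = 1" using lin z \<open>x \<in> S\<close> unfolding lin_on_def x_def by simp
    ultimately show "\<exists>x\<in>S. norm x \<le> 1 \<and> 1 - e < \<bar>f x\<bar>" using \<open>e > 0\<close>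
      by (intro bexI[of _ x]) auto
  qed
qed

lemma UF_D:
  assumes "unit_functional_on S f"
  shows "lin_on S f" "\<forall>x\<in>S. \<bar>f x\<bar> \<le> norm x" "\<forall>x. x \<notin> S \<longrightarrow> f x = 0"
  using assms unfolding unit_functional_on_def lin_on_def by blast+



lemma compact_sub_closure:
  fixes S :: "'a::metric_space set"
  assumes "compact S" "X \<subseteq> S" shows "compact (closure X)"
proof -
  have "closure X \<subseteq> S" using assms(2) compact_imp_closed[OF assms(1)] by (rule closure_minimal)
  then have "S \<inter> closure X = closure X" by blast
  then show ?thesis using compact_Int_closed[OF assms(1) closed_closure[of X]] by simp
qed

lemma K_subsp: "subsp (compact_operators :: ('a::real_normed_vector \<Rightarrow>\<^sub>L 'b::real_normed_vector) set)"
  unfolding subsp_def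
proof (intro conjI ballI allI)
  show "0 \<in> (compact_operators :: ('a \<Rightarrow>\<^sub>L 'b) set)"
  proof -
    have "blinfun_apply (0::'a \<Rightarrow>\<^sub>L 'b) ` cball 0 1 \<subseteq> {0}"
      by auto
    from compact_sub_closure[OF compact_sing this] show ?thesis by (simp add: compact_operators_def)
  qed
next
  fix A B :: "'a \<Rightarrow>\<^sub>L 'b" assume "A \<in> compact_operators" "B \<in> compact_operators"
  then have cA: "compact (closure (blinfun_apply A ` cball 0 1))" and cB: "compact (closure (blinfun_apply B ` cball 0 1))"
    unfolding compact_operators_def by auto
  have "blinfun_apply (A + B) ` cball 0 1 \<subseteq> {x + y |x y. x \<in> closure (blinfun_apply A ` cball 0 1) \<and> y \<in> closure (blinfun_apply B ` cball 0 1)}"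
  proof
    fix z assume "z \<in> blinfun_apply (A + B) ` cball 0 1"
    then obtain x where x: "x \<in> cball 0 1" "z = blinfun_apply A x + blinfun_apply B x"
      by (auto simp: blinfun.add_left)
    have "blinfun_apply A x \<in> closure (blinfun_apply A ` cball 0 1)" "blinfun_apply B x \<in> closure (blinfun_apply B ` cball 0 1)"
      using x(1) by (auto intro!: subsetD[OF closure_subset] imageI)
    then show "z \<in> {x + y |x y. x \<in> closure (blinfun_apply A ` cball 0 1) \<and> y \<in> closure (blinfun_apply B ` cball 0 1)}"
      using x(2) by blast
  qed
  from compact_sub_closure[OF compact_sums[OF cA cB] this]
  show "A + B \<in> compact_operators" by (simp add: compact_operators_def)
next
  fix c :: real and A :: "'a \<Rightarrow>\<^sub>L 'b" assume "A \<in> compact_operators"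
  then have cA: "compact (closure (blinfun_apply A ` cball 0 1))" unfolding compact_operators_def by auto
  have "blinfun_apply (c *\<^sub>R A) ` cball 0 1 \<subseteq> (\<lambda>x. c *\<^sub>R x) ` closure (blinfun_apply A ` cball 0 1)"
  proof
    fix z assume "z \<in> blinfun_apply (c *\<^sub>R A) ` cball 0 1"
    then obtain x where x: "x \<in> cball 0 1" "z = c *\<^sub>R blinfun_apply A x"
      by (auto simp: blinfun.scaleR_left)
    have "blinfun_apply A x \<in> closure (blinfun_apply A ` cball 0 1)"
      using x(1) by (auto intro!: subsetD[OF closure_subset] imageI)
    then show "z \<in> (\<lambda>x. c *\<^sub>R x) ` closure (blinfun_apply A ` cball 0 1)"
      using x(2) by blast
  qed
  from compact_sub_closure[OF compact_scaling[OF cA] this]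
  show "c *\<^sub>R A \<in> compact_operators" by (simp add: compact_operators_def)
qed

definition rank1 :: "('a::real_normed_vector \<Rightarrow>\<^sub>L real) \<Rightarrow> 'b::real_normed_vector \<Rightarrow> 'a \<Rightarrow>\<^sub>L 'b" where
  "rank1 g v = Blinfun (\<lambda>x. blinfun_apply g x *\<^sub>R v)"

lemma rank1_apply: "blinfun_apply (rank1 g v) x = blinfun_apply g x *\<^sub>R v"
proof -
  have "bounded_linear (\<lambda>x. blinfun_apply g x *\<^sub>R v)"
    using bounded_linear_compose[OF bounded_linear_scaleR_left blinfun.bounded_linear_right] .
  then show ?thesis unfolding rank1_def by (simp add: bounded_linear_Blinfun_apply)
qed

lemma rank1_K: "rank1 g v \<in> compact_operators"
proof -
  have "blinfun_apply (rank1 g v) ` cball 0 1 \<subseteq> (\<lambda>r. r *\<^sub>R v) ` cball 0 (norm g)"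
  proof
    fix z assume "z \<in> blinfun_apply (rank1 g v) ` cball 0 1"
    then obtain x where x: "norm x \<le> 1" "z = blinfun_apply g x *\<^sub>R v" by (auto simp: rank1_apply)
    have "norm (blinfun_apply g x) \<le> norm g * norm x" by (rule norm_blinfun)
    also have "\<dots> \<le> norm g" using x(1) by (simp add: mult_left_le)
    finally show "z \<in> (\<lambda>r. r *\<^sub>R v) ` cball 0 (norm g)" using x by auto
  qed
  moreover have "compact ((\<lambda>r. r *\<^sub>R v) ` cball 0 (norm g))"
    by (intro compact_continuous_image continuous_intros) auto
  ultimately show ?thesis unfolding compact_operators_def using compact_sub_closure by blast
qed

lemma near_norm:
  fixes T :: "'a::real_normed_vector \<Rightarrow>\<^sub>L 'b::real_normed_vector"
  assumes e: "e > 0"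
  shows "\<exists>x. norm x \<le> 1 \<and> norm T - e < norm (blinfun_apply T x)"
proof (rule ccontr)
  assume "\<not> ?thesis"
  then have h: "\<And>x. norm x \<le> 1 \<Longrightarrow> norm (blinfun_apply T x) \<le> norm T - e" by force
  from h[of 0] have nn: "0 \<le> norm T - e" by simp
  have "norm (blinfun_apply T x) \<le> (norm T - e) * norm x" for x
  proof (cases "x = 0")
    case True then show ?thesis by simp
  next
    case False
    have "norm (blinfun_apply T ((1 / norm x) *\<^sub>R x)) \<le> norm T - e" by (rule h) (use False in simp)
    then have "norm (blinfun_apply T x) / norm x \<le> norm T - e" using False by (simp add: blinfun.scaleR_right)
    then show ?thesis using False by (simp add: divide_le_eq)
  qed
  then have "norm T \<le> norm T - e" using nn by (intro norm_blinfun_bound)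
  then show False using e by simp
qed

lemma norming_seq:
  fixes T :: "'a::real_normed_vector \<Rightarrow>\<^sub>L 'b::real_normed_vector"
  shows "\<exists>z. (\<forall>n. norm (z n) \<le> 1) \<and> (\<lambda>n. norm (blinfun_apply T (z n))) \<longlonglongrightarrow> norm T"
proof -
  have ex: "\<exists>x. norm x \<le> 1 \<and> norm T - e < norm (blinfun_apply T x)" if e: "e > 0" for e
  proof (rule ccontr)
    assume "\<not> ?thesis"
    then have h: "\<And>x. norm x \<le> 1 \<Longrightarrow> norm (blinfun_apply T x) \<le> norm T - e" by force
    from h[of 0] have nn: "0 \<le> norm T - e" by simp
    have "norm (blinfun_apply T x) \<le> (norm T - e) * norm x" for x
    proof (cases "x = 0")
      case True then show ?thesis by simp
    next
      case False
      have "norm (blinfun_apply T ((1 / norm x) *\<^sub>R x)) \<le> norm T - e" by (rule h) (use False in simp)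
      then have "norm (blinfun_apply T x) / norm x \<le> norm T - e" using False by (simp add: blinfun.scaleR_right)
      then show ?thesis using False by (simp add: divide_le_eq)
    qed
    then have "norm T \<le> norm T - e" using nn by (intro norm_blinfun_bound)
    then show False using e by simp
  qed
  have "\<forall>n. \<exists>x. norm x \<le> 1 \<and> norm T - inverse (real (Suc n)) < norm (blinfun_apply T x)"
  proof
    fix n show "\<exists>x. norm x \<le> 1 \<and> norm T - inverse (real (Suc n)) < norm (blinfun_apply T x)"
      by (rule ex) simp
  qed
  then obtain z where z: "\<And>n. norm (z n) \<le> 1 \<and> norm T - inverse (real (Suc n)) < norm (blinfun_apply T (z n))"
    by metis
  have up: "norm (blinfun_apply T (z n)) \<le> norm T" for n
  proof -
    have "norm (blinfun_apply T (z n)) \<le> norm T * norm (z n)" by (rule norm_blinfun)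
    also have "\<dots> \<le> norm T" using z[of n] by (simp add: mult_left_le)
    finally show ?thesis .
  qed
  have lo: "(\<lambda>n. norm T - inverse (real (Suc n))) \<longlonglongrightarrow> norm T"
    using LIMSEQ_inverse_real_of_nat_add_minus[of "norm T"] by simp
  have "(\<lambda>n. norm (blinfun_apply T (z n))) \<longlonglongrightarrow> norm T"
  proof (rule tendsto_sandwich[OF _ _ lo tendsto_const])
    show "\<forall>\<^sub>F n in sequentially. norm T - inverse (real (Suc n)) \<le> norm (blinfun_apply T (z n))"
      using z less_imp_le by (intro always_eventually allI) blast
    show "\<forall>\<^sub>F n in sequentially. norm (blinfun_apply T (z n)) \<le> norm T"
      using up by (intro always_eventually allI) blast
  qed
  then show ?thesis using z by blast
qed



lemma lin_neg: "lin_on UNIV F \<Longrightarrow> F (- x) = - F x"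
proof -
  assume "lin_on UNIV F"
  then have "F ((-1) *\<^sub>R x) = (-1) * F x" unfolding lin_on_def by blast
  then show ?thesis by simp
qed

lemma cluster:
  fixes z :: "nat \<Rightarrow> 'a::real_normed_vector"
  assumes refl: "reflexive_space TYPE('a)" and z: "\<forall>n. norm (z n) \<le> 1"
  shows "\<exists>x. norm x \<le> 1 \<and>
    (\<forall>g::'a \<Rightarrow>\<^sub>L real. \<forall>a. (\<forall>n. a \<le> blinfun_apply g (z n)) \<longrightarrow> a \<le> blinfun_apply g x) \<and>
    (\<forall>g::'a \<Rightarrow>\<^sub>L real. \<forall>l. (\<lambda>n. blinfun_apply g (z n)) \<longlonglongrightarrow> l \<longrightarrow> blinfun_apply g x = l)"
proof -
  define ls where "ls g = limsup (\<lambda>n. ereal (blinfun_apply g (z n)))" for g :: "'a \<Rightarrow>\<^sub>L real"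
  have gb: "\<bar>blinfun_apply g (z n)\<bar> \<le> norm g" for g :: "'a \<Rightarrow>\<^sub>L real" and n
  proof -
    have "norm (blinfun_apply g (z n)) \<le> norm g * norm (z n)" by (rule norm_blinfun)
    also have "\<dots> \<le> norm g" using z by (simp add: mult_left_le)
    finally show ?thesis by simp
  qed
  have lsu: "ls g \<le> ereal (norm g)" for g
    unfolding ls_def by (rule Limsup_bounded) (use gb in \<open>auto intro!: always_eventually simp: abs_le_iff\<close>)
  have lsl: "- ereal (norm g) \<le> ls g" for g
  proof -
    have "- ereal (norm g) \<le> liminf (\<lambda>n. ereal (blinfun_apply g (z n)))"
      by (rule Liminf_bounded) (use gb in \<open>auto intro!: always_eventually simp: abs_le_iff minus_le_iff\<close>)
    also have "\<dots> \<le> ls g" unfolding ls_def by (rule Liminf_le_Limsup) simp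
    finally show ?thesis .
  qed
  define p where "p g = real_of_ereal (ls g)" for g
  have ep: "ereal (p g) = ls g" for g
  proof -
    have "\<bar>ls g\<bar> \<noteq> \<infinity>" using lsu[of g] lsl[of g] by auto
    then show ?thesis unfolding p_def by (simp add: ereal_real)
  qed
  have padd: "p (g + h) \<le> p g + p h" for g h
  proof -
    have "ereal (p (g + h)) = limsup (\<lambda>n. ereal (blinfun_apply g (z n)) + ereal (blinfun_apply h (z n)))"
      unfolding ep ls_def by (simp add: blinfun.add_left)
    also have "\<dots> \<le> ls g + ls h" unfolding ls_def by (rule ereal_limsup_add_mono)
    also have "\<dots> = ereal (p g + p h)" by (simp add: ep[symmetric])
    finally show ?thesis by simp
  qed
  have pscl: "p (c *\<^sub>R g) = c * p g" if c: "c \<ge> 0" for c g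
  proof -
    have "ereal (p (c *\<^sub>R g)) = limsup (\<lambda>n. ereal c * ereal (blinfun_apply g (z n)))"
      unfolding ep ls_def by (simp add: blinfun.scaleR_left)
    also have "\<dots> = ereal c * ls g" unfolding ls_def by (rule limsup_ereal_mult_left[OF c])
    also have "\<dots> = ereal (c * p g)" by (simp add: ep[symmetric])
    finally show ?thesis by simp
  qed
  have sp: "sublin p" unfolding sublin_def using padd pscl by blast
  have pn: "p g \<le> norm g" for g
  proof -
    have "ereal (p g) \<le> ereal (norm g)" using ep[of g] lsu[of g] by simp
    then show ?thesis by simp
  qed
  have p0: "p 0 = 0" using pscl[of 0 0] by simp
  have M0: "subsp {0::'a \<Rightarrow>\<^sub>L real}" unfolding subsp_def by simp
  have l0: "lin_on {0::'a \<Rightarrow>\<^sub>L real} (\<lambda>_. 0)" unfolding lin_on_def by simp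
  obtain \<phi> where phi: "lin_on UNIV \<phi>" "\<forall>g. \<phi> g \<le> p g"
    using HB[OF sp M0 l0] p0 by auto
  have phb: "\<bar>\<phi> g\<bar> \<le> 1 * norm g" for g
    using phi(2)[rule_format, of g] phi(2)[rule_format, of "-g"] pn[of g] pn[of "-g"] lin_neg[OF phi(1), of g]
    by auto
  have bl: "bounded_linear \<phi>" by (rule lin_on_UNIV_bl[OF phi(1) phb])
  obtain x where x: "\<And>g. blinfun_apply (Blinfun \<phi>) g = blinfun_apply g x"
    using refl unfolding reflexive_space_def by blast
  have phx: "\<phi> g = blinfun_apply g x" for g using x[of g] by (simp add: bounded_linear_Blinfun_apply[OF bl])
  have nx: "norm x \<le> 1"
  proof (cases "x = 0")
    case True then show ?thesis by simp
  next
    case False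
    then obtain g :: "'a \<Rightarrow>\<^sub>L real" where g: "blinfun_apply g x = norm x" "norm g \<le> 1"
      using support_fun[of x] by blast
    have "norm x = \<phi> g" using g phx by simp
    also have "\<dots> \<le> norm g" using phi(2) pn order_trans by blast
    finally show ?thesis using g by simp
  qed
  have low: "a \<le> blinfun_apply g x" if a: "\<forall>n. a \<le> blinfun_apply g (z n)" for g :: "'a \<Rightarrow>\<^sub>L real" and a
  proof -
    have "ls (-g) \<le> ereal (- a)" unfolding ls_def
      by (rule Limsup_bounded) (use a in \<open>auto intro!: always_eventually simp: blinfun.minus_left\<close>)
    then have "ereal (p (-g)) \<le> ereal (- a)" using ep[of "-g"] by metis
    then have "p (-g) \<le> - a" by (simp only: ereal_less_eq)
    then have "\<phi> (-g) \<le> -a" using phi(2) order_trans by blast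
    then show ?thesis using lin_neg[OF phi(1), of g] phx by simp
  qed
  have lim: "blinfun_apply g x = l" if l: "(\<lambda>n. blinfun_apply g (z n)) \<longlonglongrightarrow> l" for g :: "'a \<Rightarrow>\<^sub>L real" and l
  proof -
    have "ls g = ereal l" unfolding ls_def
      by (rule lim_imp_Limsup) (use l in \<open>auto intro: tendsto_ereal\<close>)
    then have "p g = l" using ep[of g] by (metis ereal.inject)
    have l2: "(\<lambda>n. blinfun_apply (-g) (z n)) \<longlonglongrightarrow> -l" using tendsto_minus[OF l] by (simp add: blinfun.minus_left)
    have "ls (-g) = ereal (-l)" unfolding ls_def
      by (rule lim_imp_Limsup) (use l2 in \<open>auto intro: tendsto_ereal\<close>)
    then have "p (-g) = -l" using ep[of "-g"] by (metis ereal.inject)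
    have "\<phi> g \<le> l" using phi(2) \<open>p g = l\<close> by metis
    moreover have "\<phi> (-g) \<le> -l" using phi(2) \<open>p (-g) = -l\<close> by metis
    ultimately show ?thesis using lin_neg[OF phi(1), of g] phx by simp
  qed
  show ?thesis using nx low lim by blast
qed



lemma subseq_T:
  fixes T :: "'a::real_normed_vector \<Rightarrow>\<^sub>L 'b::real_normed_vector" and z :: "nat \<Rightarrow> 'a"
  assumes T: "T \<in> compact_operators" and z: "\<forall>n. norm (z n) \<le> 1"
  shows "\<exists>r y. strict_mono r \<and> (\<lambda>n. blinfun_apply T (z (r n))) \<longlonglongrightarrow> y"
proof -
  have cT: "compact (closure (blinfun_apply T ` cball 0 1))"
    using T unfolding compact_operators_def by simp
  have sc: "seq_compact (closure (blinfun_apply T ` cball 0 1))"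
    by (rule compact_imp_seq_compact[OF cT])
  have mem: "\<forall>n. (blinfun_apply T \<circ> z) n \<in> closure (blinfun_apply T ` cball 0 1)"
  proof
    fix n
    have "z n \<in> cball 0 1" using z by simp
    then have "blinfun_apply T (z n) \<in> blinfun_apply T ` cball 0 1" by (rule imageI)
    then show "(blinfun_apply T \<circ> z) n \<in> closure (blinfun_apply T ` cball 0 1)"
      unfolding o_def by (rule subsetD[OF closure_subset])
  qed
  have sc2: "\<forall>f. (\<forall>n. f n \<in> closure (blinfun_apply T ` cball 0 1)) \<longrightarrow>
     (\<exists>l\<in>closure (blinfun_apply T ` cball 0 1). \<exists>r::nat\<Rightarrow>nat. strict_mono r \<and> (f \<circ> r) \<longlonglongrightarrow> l)"
    using sc unfolding seq_compact_def by simp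
  from mp[OF spec[OF sc2, of "blinfun_apply T \<circ> z"] mem] obtain l r
    where "l \<in> closure (blinfun_apply T ` cball 0 1)" "strict_mono r" "((blinfun_apply T \<circ> z) \<circ> r) \<longlonglongrightarrow> l"
    by blast
  then have "strict_mono r" "(\<lambda>n. blinfun_apply T (z (r n))) \<longlonglongrightarrow> l" by (simp_all add: o_def)
  then show ?thesis by blast
qed

lemma cl_T:
  fixes T :: "'a::real_normed_vector \<Rightarrow>\<^sub>L 'b::real_normed_vector" and z :: "nat \<Rightarrow> 'a"
  assumes refl: "reflexive_space TYPE('a)" and z: "\<forall>n. norm (z n) \<le> 1"
    and y: "(\<lambda>n. blinfun_apply T (z n)) \<longlonglongrightarrow> y"
  shows "\<exists>x. norm x \<le> 1 \<and> blinfun_apply T x = y \<and>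
    (\<forall>g::'a \<Rightarrow>\<^sub>L real. \<forall>a. (\<forall>n. a \<le> blinfun_apply g (z n)) \<longrightarrow> a \<le> blinfun_apply g x)"
proof -
  obtain x where x: "norm x \<le> 1"
    "\<forall>g::'a \<Rightarrow>\<^sub>L real. \<forall>a. (\<forall>n. a \<le> blinfun_apply g (z n)) \<longrightarrow> a \<le> blinfun_apply g x"
    "\<forall>g::'a \<Rightarrow>\<^sub>L real. \<forall>l. (\<lambda>n. blinfun_apply g (z n)) \<longlonglongrightarrow> l \<longrightarrow> blinfun_apply g x = l"
    using cluster[OF refl z] by blast
  have "blinfun_apply h (blinfun_apply T x) = blinfun_apply h y" for h :: "'b \<Rightarrow>\<^sub>L real"
  proof -
    have "(\<lambda>n. blinfun_apply (h o\<^sub>L T) (z n)) \<longlonglongrightarrow> blinfun_apply h y"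
      using blinfun.tendsto[OF tendsto_const y, of h] by simp
    then have "blinfun_apply (h o\<^sub>L T) x = blinfun_apply h y" using x(3) by blast
    then show ?thesis by simp
  qed
  then have "blinfun_apply T x = y" by (rule separate)
  then show ?thesis using x by blast
qed

lemma Mnorm:
  fixes T :: "'a::real_normed_vector \<Rightarrow>\<^sub>L 'b::real_normed_vector"
  assumes "T \<noteq> 0" "norm x \<le> 1" "norm (blinfun_apply T x) = norm T"
  shows "norm x = 1"
proof -
  have "norm T \<le> norm T * norm x" using norm_blinfun[of T x] assms(3) by simp
  then have "1 \<le> norm x" using assms(1) by (simp add: mult_le_cancel_left1)
  then show ?thesis using assms(2) by simp
qed

lemma exist_x0:
  fixes T :: "'a::real_normed_vector \<Rightarrow>\<^sub>L 'b::real_normed_vector"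
  assumes refl: "reflexive_space TYPE('a)" and T: "T \<in> compact_operators"
  shows "\<exists>x0. norm x0 \<le> 1 \<and> norm (blinfun_apply T x0) = norm T"
proof -
  obtain z where z: "\<forall>n. norm (z n) \<le> 1" "(\<lambda>n. norm (blinfun_apply T (z n))) \<longlonglongrightarrow> norm T"
    using norming_seq by blast
  obtain r y where r: "strict_mono r" "(\<lambda>n. blinfun_apply T (z (r n))) \<longlonglongrightarrow> y"
    using subseq_T[OF T z(1)] by blast
  have "(\<lambda>n. norm (blinfun_apply T (z (r n)))) \<longlonglongrightarrow> norm T"
    using LIMSEQ_subseq_LIMSEQ[OF z(2) r(1)] by (simp add: o_def)
  moreover have "(\<lambda>n. norm (blinfun_apply T (z (r n)))) \<longlonglongrightarrow> norm y"
    using tendsto_norm[OF r(2)] .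
  ultimately have ny: "norm y = norm T" using LIMSEQ_unique by blast
  have "\<forall>n. norm (z (r n)) \<le> 1" using z by blast
  from cl_T[OF refl this r(2)] obtain x where "norm x \<le> 1" "blinfun_apply T x = y" by blast
  then show ?thesis using ny by blast
qed



lemma phi_unit:
  fixes T :: "'a::real_normed_vector \<Rightarrow>\<^sub>L 'b::real_normed_vector" and \<psi> :: "'b \<Rightarrow>\<^sub>L real" and x :: 'a
  assumes T: "T \<in> compact_operators" "T \<noteq> 0" and psi: "\<forall>v. \<bar>blinfun_apply \<psi> v\<bar> \<le> norm v"
    and x: "norm x \<le> 1" and val: "blinfun_apply \<psi> (blinfun_apply T x) = norm T"
  shows "unit_functional_on compact_operators
           (\<lambda>A. if A \<in> compact_operators then blinfun_apply \<psi> (blinfun_apply A x) else 0)"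
proof (rule UF_intro[OF K_subsp])
  have Kadd: "A + B \<in> compact_operators" if "A \<in> compact_operators" "B \<in> compact_operators" for A B :: "'a \<Rightarrow>\<^sub>L 'b"
    using K_subsp that unfolding subsp_def by blast
  have Kscl: "c *\<^sub>R A \<in> compact_operators" if "A \<in> compact_operators" for A :: "'a \<Rightarrow>\<^sub>L 'b" and c
    using K_subsp that unfolding subsp_def by blast
  show "lin_on compact_operators (\<lambda>A. if A \<in> compact_operators then blinfun_apply \<psi> (blinfun_apply A x) else 0)"
    unfolding lin_on_def using Kadd Kscl
    by (simp add: blinfun.add_left blinfun.add_right blinfun.scaleR_left blinfun.scaleR_right)
  show "\<forall>A\<in>compact_operators. \<bar>if A \<in> compact_operators then blinfun_apply \<psi> (blinfun_apply A x) else 0\<bar> \<le> norm A"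
  proof
    fix A :: "'a \<Rightarrow>\<^sub>L 'b" assume "A \<in> compact_operators"
    have "\<bar>blinfun_apply \<psi> (blinfun_apply A x)\<bar> \<le> norm (blinfun_apply A x)" using psi by blast
    also have "\<dots> \<le> norm A * norm x" by (rule norm_blinfun)
    also have "\<dots> \<le> norm A" using x by (simp add: mult_left_le)
    finally show "\<bar>if A \<in> compact_operators then blinfun_apply \<psi> (blinfun_apply A x) else 0\<bar> \<le> norm A"
      using \<open>A \<in> compact_operators\<close> by simp
  qed
  show "\<forall>A. A \<notin> compact_operators \<longrightarrow> (if A \<in> compact_operators then blinfun_apply \<psi> (blinfun_apply A x) else 0) = 0"
    by simp
  show "T \<in> compact_operators" "T \<noteq> 0" using T by auto
  show "(if T \<in> compact_operators then blinfun_apply \<psi> (blinfun_apply T x) else 0) = norm T"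
    using T val by simp
qed

lemma MT_unique:
  fixes T :: "'a::real_normed_vector \<Rightarrow>\<^sub>L 'b::real_normed_vector"
  assumes sm: "smooth_point_in compact_operators T"
    and x0: "norm x0 \<le> 1" "norm (blinfun_apply T x0) = norm T"
    and x1: "norm x1 \<le> 1" "norm (blinfun_apply T x1) = norm T"
  shows "x1 = x0 \<or> x1 = - x0"
proof -
  have TK: "T \<in> compact_operators" and T0: "T \<noteq> 0"
    and uq: "\<exists>!f. unit_functional_on compact_operators f \<and> f T = norm T"
    using sm unfolding smooth_point_in_def by auto
  have nT: "norm T > 0" using T0 by simp
  have Tx0: "blinfun_apply T x0 \<noteq> 0" using x0 T0 by auto
  have Tx1: "blinfun_apply T x1 \<noteq> 0" using x1 T0 by auto
  obtain \<psi>0 :: "'b \<Rightarrow>\<^sub>L real" where p0: "blinfun_apply \<psi>0 (blinfun_apply T x0) = norm (blinfun_apply T x0)"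
    "\<forall>v. \<bar>blinfun_apply \<psi>0 v\<bar> \<le> norm v" using support_fun[OF Tx0] by blast
  obtain \<psi>1 :: "'b \<Rightarrow>\<^sub>L real" where p1: "blinfun_apply \<psi>1 (blinfun_apply T x1) = norm (blinfun_apply T x1)"
    "\<forall>v. \<bar>blinfun_apply \<psi>1 v\<bar> \<le> norm v" using support_fun[OF Tx1] by blast
  define \<Phi>0 where "\<Phi>0 = (\<lambda>A. if A \<in> compact_operators then blinfun_apply \<psi>0 (blinfun_apply A x0) else 0)"
  define \<Phi>1 where "\<Phi>1 = (\<lambda>A. if A \<in> compact_operators then blinfun_apply \<psi>1 (blinfun_apply A x1) else 0)"
  have u0: "unit_functional_on compact_operators \<Phi>0 \<and> \<Phi>0 T = norm T"
    unfolding \<Phi>0_def using phi_unit[OF TK T0 p0(2) x0(1)] p0(1) x0(2) TK by simp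
  have u1: "unit_functional_on compact_operators \<Phi>1 \<and> \<Phi>1 T = norm T"
    unfolding \<Phi>1_def using phi_unit[OF TK T0 p1(2) x1(1)] p1(1) x1(2) TK by simp
  have eq: "\<Phi>0 = \<Phi>1" using uq u0 u1 by blast
  define c where "c = blinfun_apply \<psi>1 (blinfun_apply T x0) / norm T"
  have "blinfun_apply g x0 = blinfun_apply g (c *\<^sub>R x1)" for g :: "'a \<Rightarrow>\<^sub>L real"
  proof -
    have "\<Phi>0 (rank1 g (blinfun_apply T x0)) = \<Phi>1 (rank1 g (blinfun_apply T x0))" using eq by simp
    then have "blinfun_apply g x0 * norm T = blinfun_apply g x1 * blinfun_apply \<psi>1 (blinfun_apply T x0)"
      unfolding \<Phi>0_def \<Phi>1_def using rank1_K[of g "blinfun_apply T x0"] p0(1) x0(2)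
      by (simp add: rank1_apply blinfun.scaleR_right)
    then have "blinfun_apply g x0 = blinfun_apply g x1 * c" unfolding c_def using nT
      by (simp add: field_simps)
    then show ?thesis by (simp add: blinfun.scaleR_right mult.commute)
  qed
  then have x0c: "x0 = c *\<^sub>R x1" by (rule separate)
  have n0: "norm x0 = 1" by (rule Mnorm[OF T0 x0])
  have n1: "norm x1 = 1" by (rule Mnorm[OF T0 x1])
  have "\<bar>c\<bar> = 1" using n0 n1 x0c by simp
  then have "c = 1 \<or> c = -1" by auto
  then show ?thesis using x0c by auto
qed



lemma extract_subseq:
  assumes P: "\<forall>m. \<exists>n\<ge>m. P n"
  shows "\<exists>q::nat\<Rightarrow>nat. strict_mono q \<and> (\<forall>n. P (q n))"
proof -
  define q where "q = rec_nat (SOME n. n \<ge> 0 \<and> P n) (\<lambda>_ k. SOME n. n \<ge> Suc k \<and> P n)"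
  have q0: "q 0 = (SOME n. n \<ge> 0 \<and> P n)" unfolding q_def by simp
  have qS: "q (Suc k) = (SOME n. n \<ge> Suc (q k) \<and> P n)" for k unfolding q_def by simp
  have ex: "\<exists>n. n \<ge> m \<and> P n" for m using P by blast
  have a: "P (q n)" for n
  proof (cases n)
    case 0 then show ?thesis using someI_ex[OF ex[of 0]] q0 by simp
  next
    case (Suc k) then show ?thesis using someI_ex[OF ex[of "Suc (q k)"]] qS by simp
  qed
  have b: "q k < q (Suc k)" for k using someI_ex[OF ex[of "Suc (q k)"]] qS[of k] by simp
  have "strict_mono q" unfolding strict_mono_Suc_iff using b by blast
  then show ?thesis using a by blast
qed

lemma KEY:
  fixes T :: "'a::real_normed_vector \<Rightarrow>\<^sub>L 'b::real_normed_vector" and z :: "nat \<Rightarrow> 'a"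
  assumes refl: "reflexive_space TYPE('a)" and kk: "kadets_klee TYPE('a)"
    and TK: "T \<in> compact_operators" and T0: "T \<noteq> 0"
    and MT: "\<forall>x. norm x \<le> 1 \<and> norm (blinfun_apply T x) = norm T \<longrightarrow> x = x0 \<or> x = - x0"
    and z: "\<forall>n. norm (z n) \<le> 1" and zl: "(\<lambda>n. norm (blinfun_apply T (z n))) \<longlonglongrightarrow> norm T"
  shows "\<exists>r. strict_mono r \<and> ((\<lambda>n. z (r n)) \<longlonglongrightarrow> x0 \<or> (\<lambda>n. z (r n)) \<longlonglongrightarrow> - x0)"
proof -
  obtain r y where r: "strict_mono r" "(\<lambda>n. blinfun_apply T (z (r n))) \<longlonglongrightarrow> y"
    using subseq_T[OF TK z] by blast
  define w where "w n = z (r n)" for n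
  have wb: "\<forall>n. norm (w n) \<le> 1" using z unfolding w_def by blast
  have wl: "(\<lambda>n. blinfun_apply T (w n)) \<longlonglongrightarrow> y" using r(2) unfolding w_def .
  have wnl: "(\<lambda>n. norm (blinfun_apply T (w n))) \<longlonglongrightarrow> norm T"
    using LIMSEQ_subseq_LIMSEQ[OF zl r(1)] unfolding w_def by (simp add: o_def)
  have ny: "norm y = norm T" using LIMSEQ_unique[OF tendsto_norm[OF wl] wnl] .
  obtain xs where xs: "norm xs \<le> 1" "blinfun_apply T xs = y"
    "\<forall>g::'a \<Rightarrow>\<^sub>L real. \<forall>a. (\<forall>n. a \<le> blinfun_apply g (w n)) \<longrightarrow> a \<le> blinfun_apply g xs"
    using cl_T[OF refl wb wl] by blast
  have xsM: "xs = x0 \<or> xs = - x0" using MT xs ny by auto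
  have nT: "norm T > 0" using T0 by simp
  have Txs0: "blinfun_apply T xs \<noteq> 0" using xs(2) ny nT by auto
  have same: "x' = xs" if "norm x' \<le> 1" "blinfun_apply T x' = y" for x'
  proof -
    have "x' = x0 \<or> x' = - x0" using MT that ny by auto
    then have "x' = xs \<or> x' = - xs" using xsM by auto
    moreover have "x' \<noteq> - xs"
    proof
      assume "x' = - xs"
      then have "blinfun_apply T xs = - blinfun_apply T xs" using that(2) xs(2) by (simp add: blinfun.minus_right)
      then have "blinfun_apply T xs + blinfun_apply T xs = 0" by (simp add: eq_neg_iff_add_eq_0)
      then have "2 *\<^sub>R blinfun_apply T xs = 0" by (simp add: scaleR_2)
      then show False using Txs0 by simp
    qed
    ultimately show ?thesis by blast
  qed
  have weak: "(\<lambda>n. blinfun_apply g (w n)) \<longlonglongrightarrow> blinfun_apply g xs" for g :: "'a \<Rightarrow>\<^sub>L real"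
  proof (rule ccontr)
    assume nc: "\<not> ?thesis"
    obtain e where e: "e > 0" "\<forall>N. \<exists>n\<ge>N. e \<le> \<bar>blinfun_apply g (w n) - blinfun_apply g xs\<bar>"
    proof -
      have "\<not> (\<forall>e>0. \<exists>N. \<forall>n\<ge>N. norm (blinfun_apply g (w n) - blinfun_apply g xs) < e)"
        using nc unfolding LIMSEQ_iff by blast
      then show ?thesis using that by (auto simp: not_less)
    qed
    have cases: "(\<forall>m. \<exists>n\<ge>m. blinfun_apply g xs + e \<le> blinfun_apply g (w n)) \<or>
                 (\<forall>m. \<exists>n\<ge>m. - blinfun_apply g xs + e \<le> - blinfun_apply g (w n))"
    proof (rule ccontr)
      assume "\<not> ?thesis"
      then obtain m1 m2 where m1: "\<forall>n\<ge>m1. \<not> blinfun_apply g xs + e \<le> blinfun_apply g (w n)"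
        and m2: "\<forall>n\<ge>m2. \<not> - blinfun_apply g xs + e \<le> - blinfun_apply g (w n)" by blast
      obtain n where "n \<ge> max m1 m2" "e \<le> \<bar>blinfun_apply g (w n) - blinfun_apply g xs\<bar>" using e by blast
      then show False using m1 m2 by (auto simp: abs_if split: if_splits)
    qed
    have contra: "False" if h: "\<forall>m. \<exists>n\<ge>m. blinfun_apply h xs + e \<le> blinfun_apply h (w n)" for h :: "'a \<Rightarrow>\<^sub>L real"
    proof -
      obtain q :: "nat \<Rightarrow> nat" where q: "strict_mono q" "\<forall>n. blinfun_apply h xs + e \<le> blinfun_apply h (w (q n))"
        using extract_subseq[OF h] by blast
      have vb: "\<forall>n. norm (w (q n)) \<le> 1" using wb by blast
      have vl: "(\<lambda>n. blinfun_apply T (w (q n))) \<longlonglongrightarrow> y"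
        using LIMSEQ_subseq_LIMSEQ[OF wl q(1)] by (simp add: o_def)
      obtain x' where x': "norm x' \<le> 1" "blinfun_apply T x' = y"
        "\<forall>g::'a \<Rightarrow>\<^sub>L real. \<forall>a. (\<forall>n. a \<le> blinfun_apply g (w (q n))) \<longrightarrow> a \<le> blinfun_apply g x'"
        using cl_T[OF refl vb vl] by blast
      have "blinfun_apply h xs + e \<le> blinfun_apply h x'" using x'(3) q(2) by blast
      moreover have "x' = xs" using same x' by blast
      ultimately show False using e by simp
    qed
    from cases show False
    proof
      assume "\<forall>m. \<exists>n\<ge>m. blinfun_apply g xs + e \<le> blinfun_apply g (w n)"
      then show False using contra by blast
    next
      assume "\<forall>m. \<exists>n\<ge>m. - blinfun_apply g xs + e \<le> - blinfun_apply g (w n)"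
      then have "\<forall>m. \<exists>n\<ge>m. blinfun_apply (-g) xs + e \<le> blinfun_apply (-g) (w n)"
        by (simp add: blinfun.minus_left)
      then show False using contra by blast
    qed
  qed
  have nxs: "norm xs = 1" using Mnorm[OF T0 xs(1)] xs(2) ny by simp
  have nw: "(\<lambda>n. norm (w n)) \<longlonglongrightarrow> norm xs"
  proof -
    have lo: "(\<lambda>n. norm (blinfun_apply T (w n)) / norm T) \<longlonglongrightarrow> 1"
      using tendsto_divide[OF wnl tendsto_const, of "norm T"] nT by simp
    have "(\<lambda>n. norm (w n)) \<longlonglongrightarrow> 1"
    proof (rule tendsto_sandwich[OF _ _ lo tendsto_const])
      show "\<forall>\<^sub>F n in sequentially. norm (blinfun_apply T (w n)) / norm T \<le> norm (w n)"
      proof (intro always_eventually allI)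
        fix n
        have "norm (blinfun_apply T (w n)) \<le> norm T * norm (w n)" by (rule norm_blinfun)
        then show "norm (blinfun_apply T (w n)) / norm T \<le> norm (w n)" using nT
          by (simp add: divide_le_eq mult.commute)
      qed
      show "\<forall>\<^sub>F n in sequentially. norm (w n) \<le> 1" using wb by (intro always_eventually) blast
    qed
    then show ?thesis using nxs by simp
  qed
  have "weakly_converges w xs" unfolding weakly_converges_def using weak by blast
  then have "(\<lambda>n. norm (w n - xs)) \<longlonglongrightarrow> 0"
    using kk[unfolded kadets_klee_def, rule_format, of w xs] nw by blast
  then have "(\<lambda>n. w n - xs) \<longlonglongrightarrow> 0" by (simp add: tendsto_norm_zero_iff)
  then have "w \<longlonglongrightarrow> xs" by (rule Lim_null[THEN iffD2])
  then have "(\<lambda>n. z (r n)) \<longlonglongrightarrow> xs" unfolding w_def by simp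
  then show ?thesis using r(1) xsM by blast
qed



lemma Dzero:
  fixes T D :: "'a::real_normed_vector \<Rightarrow>\<^sub>L 'b::real_normed_vector" and F :: "('a \<Rightarrow>\<^sub>L 'b) \<Rightarrow> real"
  assumes key: "\<And>z. \<forall>n. norm (z n) \<le> 1 \<Longrightarrow> (\<lambda>n. norm (blinfun_apply T (z n))) \<longlonglongrightarrow> norm T \<Longrightarrow>
      \<exists>r. strict_mono r \<and> ((\<lambda>n. z (r n)) \<longlonglongrightarrow> x0 \<or> (\<lambda>n. z (r n)) \<longlonglongrightarrow> - x0)"
    and F: "unit_functional_on UNIV F" "F T = norm T" and D0: "blinfun_apply D x0 = 0"
  shows "F D \<le> 0"
proof (rule ccontr)
  assume "\<not> F D \<le> 0"
  then have c: "F D > 0" by simp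
  have lin: "lin_on UNIV F" and Fb: "\<forall>x. \<bar>F x\<bar> \<le> norm x" using UF_D[OF F(1)] by auto
  define t where "t n = inverse (real (Suc n))" for n
  have t0: "t n > 0" for n unfolding t_def by simp
  have t1: "t n \<le> 1" for n unfolding t_def by (simp add: inverse_le_1_iff)
  have tl: "t \<longlonglongrightarrow> 0" unfolding t_def by (rule LIMSEQ_inverse_real_of_nat)
  have "\<forall>n. \<exists>x. norm x \<le> 1 \<and> norm (T + t n *\<^sub>R D) - t n * t n < norm (blinfun_apply (T + t n *\<^sub>R D) x)"
  proof
    fix n show "\<exists>x. norm x \<le> 1 \<and> norm (T + t n *\<^sub>R D) - t n * t n < norm (blinfun_apply (T + t n *\<^sub>R D) x)"
      by (rule near_norm) (use t0[of n] in simp)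
  qed
  then obtain z where z: "\<And>n. norm (z n) \<le> 1"
    "\<And>n. norm (T + t n *\<^sub>R D) - t n * t n < norm (blinfun_apply (T + t n *\<^sub>R D) (z n))"
    by metis
  have TzB: "norm (blinfun_apply T (z n)) \<le> norm T" for n
    using norm_blinfun[of T "z n"] z(1)[of n] mult_left_le[of "norm (z n)" "norm T"] by simp
  have DzB: "norm (blinfun_apply D (z n)) \<le> norm D" for n
    using norm_blinfun[of D "z n"] z(1)[of n] mult_left_le[of "norm (z n)" "norm D"] by simp
  have star: "norm T + t n * F D < norm (blinfun_apply T (z n)) + t n * norm (blinfun_apply D (z n)) + t n * t n" for n
  proof -
    have "F (T + t n *\<^sub>R D) = F T + t n * F D" using lin unfolding lin_on_def by simp
    then have "norm T + t n * F D \<le> norm (T + t n *\<^sub>R D)" using Fb F(2) by (metis abs_ge_self order_trans)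
    also have "\<dots> < norm (blinfun_apply (T + t n *\<^sub>R D) (z n)) + t n * t n" using z(2)[of n] by simp
    also have "norm (blinfun_apply (T + t n *\<^sub>R D) (z n)) \<le> norm (blinfun_apply T (z n)) + t n * norm (blinfun_apply D (z n))"
      using norm_triangle_ineq[of "blinfun_apply T (z n)" "t n *\<^sub>R blinfun_apply D (z n)"] t0[of n]
      by (simp add: blinfun.add_left blinfun.scaleR_left)
    finally show ?thesis by simp
  qed
  have i: "F D < norm (blinfun_apply D (z n)) + t n" for n
  proof -
    have "t n * F D < t n * (norm (blinfun_apply D (z n)) + t n)"
      using star[of n] TzB[of n] by (simp add: distrib_left)
    then show ?thesis using t0[of n] by simp
  qed
  have ii: "norm T - t n * (norm D + 1) \<le> norm (blinfun_apply T (z n))" for n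
  proof -
    have "t n * norm (blinfun_apply D (z n)) \<le> t n * norm D" using DzB[of n] t0[of n] by (simp add: mult_left_mono)
    moreover have "t n * t n \<le> t n" using t0[of n] t1[of n] by (simp add: mult_left_le)
    moreover have "0 < t n * F D" using t0[of n] c by simp
    ultimately show ?thesis using star[of n] by (simp add: distrib_left)
  qed
  have lo: "(\<lambda>n. norm T - t n * (norm D + 1)) \<longlonglongrightarrow> norm T"
    using tendsto_diff[OF tendsto_const tendsto_mult[OF tl tendsto_const], of "norm T" "norm D + 1"] by simp
  have zl: "(\<lambda>n. norm (blinfun_apply T (z n))) \<longlonglongrightarrow> norm T"
  proof (rule tendsto_sandwich[OF _ _ lo tendsto_const])
    show "\<forall>\<^sub>F n in sequentially. norm T - t n * (norm D + 1) \<le> norm (blinfun_apply T (z n))"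
      using ii by (intro always_eventually allI) blast
    show "\<forall>\<^sub>F n in sequentially. norm (blinfun_apply T (z n)) \<le> norm T"
      using TzB by (intro always_eventually allI) blast
  qed
  obtain r where r: "strict_mono r" "(\<lambda>n. z (r n)) \<longlonglongrightarrow> x0 \<or> (\<lambda>n. z (r n)) \<longlonglongrightarrow> - x0"
    using key[OF _ zl] z(1) by blast
  have Dl: "(\<lambda>n. blinfun_apply D (z (r n))) \<longlonglongrightarrow> 0"
  proof (cases "(\<lambda>n. z (r n)) \<longlonglongrightarrow> x0")
    case True
    from blinfun.tendsto[OF tendsto_const True, of D] show ?thesis using D0 by simp
  next
    case False
    then have "(\<lambda>n. z (r n)) \<longlonglongrightarrow> - x0" using r(2) by blast
    from blinfun.tendsto[OF tendsto_const this, of D] show ?thesis using D0 by (simp add: blinfun.minus_right)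
  qed
  have "(\<lambda>n. norm (blinfun_apply D (z (r n))) + t (r n)) \<longlonglongrightarrow> 0 + 0"
    using tendsto_add[OF tendsto_norm_zero[OF Dl] LIMSEQ_subseq_LIMSEQ[OF tl r(1)]] by (simp add: o_def)
  then have "F D \<le> 0 + 0" by (rule LIMSEQ_le_const) (use i less_imp_le in blast)
  then show False using c by simp
qed



lemma UNIV_subsp: "subsp (UNIV :: 'v::real_vector set)" unfolding subsp_def by simp

lemma restrict_unit:
  fixes T :: "'a::real_normed_vector \<Rightarrow>\<^sub>L 'b::real_normed_vector"
  assumes F: "unit_functional_on UNIV F" "F T = norm T" and TK: "T \<in> compact_operators" and T0: "T \<noteq> 0"
  shows "unit_functional_on compact_operators (\<lambda>A. if A \<in> compact_operators then F A else 0)"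
proof (rule UF_intro[OF K_subsp])
  have lin: "lin_on UNIV F" and Fb: "\<forall>x. \<bar>F x\<bar> \<le> norm x" using UF_D[OF F(1)] by auto
  have Kadd: "A + B \<in> compact_operators" if "A \<in> compact_operators" "B \<in> compact_operators" for A B :: "'a \<Rightarrow>\<^sub>L 'b"
    using K_subsp that unfolding subsp_def by blast
  have Kscl: "c *\<^sub>R A \<in> compact_operators" if "A \<in> compact_operators" for A :: "'a \<Rightarrow>\<^sub>L 'b" and c
    using K_subsp that unfolding subsp_def by blast
  show "lin_on compact_operators (\<lambda>A. if A \<in> compact_operators then F A else 0)"
    using lin Kadd Kscl unfolding lin_on_def by simp
  show "\<forall>x\<in>compact_operators. \<bar>if x \<in> compact_operators then F x else 0\<bar> \<le> norm x" using Fb by simp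
  show "\<forall>x. x \<notin> compact_operators \<longrightarrow> (if x \<in> compact_operators then F x else 0) = 0" by simp
  show "T \<in> compact_operators" "T \<noteq> 0" "(if T \<in> compact_operators then F T else 0) = norm T"
    using TK T0 F(2) by auto
qed

lemma extend_unit:
  fixes T :: "'a::real_normed_vector \<Rightarrow>\<^sub>L 'b::real_normed_vector"
  assumes f: "unit_functional_on compact_operators f" "f T = norm T" and TK: "T \<in> compact_operators" and T0: "T \<noteq> 0"
  shows "\<exists>G. unit_functional_on UNIV G \<and> G T = norm T \<and> (\<forall>A\<in>compact_operators. G A = f A)"
proof -
  have lin: "lin_on compact_operators f" and fb: "\<forall>x\<in>compact_operators. \<bar>f x\<bar> \<le> norm x"
    using UF_D[OF f(1)] by auto
  have fb1: "\<forall>x\<in>compact_operators. f x \<le> 1 * norm x" using fb by (auto intro: order_trans[OF abs_ge_self])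
  obtain G where G: "lin_on UNIV G" "\<forall>x\<in>compact_operators. G x = f x" "\<forall>x. \<bar>G x\<bar> \<le> 1 * norm x"
    using HB_norm[OF K_subsp lin _ fb1] by auto
  have GT: "G T = norm T" using G(2) TK f(2) by simp
  have "unit_functional_on UNIV G"
    by (rule UF_intro[OF UNIV_subsp G(1)]) (use G(3) GT T0 in auto)
  then show ?thesis using GT G(2) by blast
qed

theorem theorem3p5:
  fixes T :: "'a::banach \<Rightarrow>\<^sub>L 'b::real_normed_vector"
  assumes "reflexive_space TYPE('a)"
    and "kadets_klee TYPE('a)"
    and "T \<in> compact_operators"
  shows "smooth_point_in (UNIV :: ('a \<Rightarrow>\<^sub>L 'b) set) T
         \<longleftrightarrow> smooth_point_in (compact_operators :: ('a \<Rightarrow>\<^sub>L 'b) set) T"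
proof
  assume sm: "smooth_point_in (UNIV :: ('a \<Rightarrow>\<^sub>L 'b) set) T"
  then have T0: "T \<noteq> 0" and uq: "\<exists>!F. unit_functional_on UNIV F \<and> F T = norm T"
    unfolding smooth_point_in_def by auto
  obtain F where F: "unit_functional_on UNIV F" "F T = norm T"
    and Fu: "\<And>G. unit_functional_on UNIV G \<Longrightarrow> G T = norm T \<Longrightarrow> G = F" using uq by blast
  define f where "f = (\<lambda>A. if A \<in> compact_operators then F A else 0)"
  have fu: "unit_functional_on compact_operators f" unfolding f_def by (rule restrict_unit[OF F assms(3) T0])
  have fT: "f T = norm T" unfolding f_def using assms(3) F(2) by simp
  have "g = f" if g: "unit_functional_on compact_operators g" "g T = norm T" for g
  proof
    fix A
    obtain G where G: "unit_functional_on UNIV G" "G T = norm T" "\<forall>A\<in>compact_operators. G A = g A"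
      using extend_unit[OF g assms(3) T0] by blast
    have "G = F" using Fu G by blast
    show "g A = f A"
    proof (cases "A \<in> compact_operators")
      case True then show ?thesis using G(3) \<open>G = F\<close> unfolding f_def by simp
    next
      case False then show ?thesis using UF_D(3)[OF g(1)] unfolding f_def by simp
    qed
  qed
  then have "\<exists>!f. unit_functional_on compact_operators f \<and> f T = norm T" using fu fT by blast
  then show "smooth_point_in (compact_operators :: ('a \<Rightarrow>\<^sub>L 'b) set) T"
    unfolding smooth_point_in_def using assms(3) T0 by blast
next
  assume sm: "smooth_point_in (compact_operators :: ('a \<Rightarrow>\<^sub>L 'b) set) T"
  then have T0: "T \<noteq> 0" and uq: "\<exists>!f. unit_functional_on compact_operators f \<and> f T = norm T"
    unfolding smooth_point_in_def by auto
  obtain f where f: "unit_functional_on compact_operators f" "f T = norm T"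
    and fu: "\<And>g. unit_functional_on compact_operators g \<Longrightarrow> g T = norm T \<Longrightarrow> g = f" using uq by blast
  obtain x0 where x0: "norm x0 \<le> 1" "norm (blinfun_apply T x0) = norm T"
    using exist_x0[OF assms(1,3)] by blast
  have MT: "\<forall>x. norm x \<le> 1 \<and> norm (blinfun_apply T x) = norm T \<longrightarrow> x = x0 \<or> x = - x0"
    using MT_unique[OF sm x0] by blast
  have nx0: "norm x0 = 1" by (rule Mnorm[OF T0 x0])
  then have "x0 \<noteq> 0" by auto
  then obtain g0 :: "'a \<Rightarrow>\<^sub>L real" where g0: "blinfun_apply g0 x0 = 1"
    using support_fun[of x0] nx0 by auto
  have key: "\<exists>r. strict_mono r \<and> ((\<lambda>n. z (r n)) \<longlonglongrightarrow> x0 \<or> (\<lambda>n. z (r n)) \<longlonglongrightarrow> - x0)"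
    if "\<forall>n. norm (z n) \<le> 1" "(\<lambda>n. norm (blinfun_apply T (z n))) \<longlonglongrightarrow> norm T" for z
    by (rule KEY[OF assms(1,2,3) T0 MT that])
  have val: "F A = f (rank1 g0 (blinfun_apply A x0))"
    if F: "unit_functional_on UNIV F" "F T = norm T" for F A
  proof -
    have lin: "lin_on UNIV F" using UF_D[OF F(1)] by auto
    define C where "C = rank1 g0 (blinfun_apply A x0)"
    define D where "D = A - C"
    have CK: "C \<in> compact_operators" unfolding C_def by (rule rank1_K)
    have D0: "blinfun_apply D x0 = 0" unfolding D_def C_def
      by (simp add: blinfun.diff_left rank1_apply g0)
    have mD0: "blinfun_apply (- D) x0 = 0" using D0 by (simp add: blinfun.minus_left)
    have "F D \<le> 0" by (rule Dzero[OF key F D0]) auto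
    moreover have "F (- D) \<le> 0" by (rule Dzero[OF key F mD0]) auto
    ultimately have FD: "F D = 0" using lin_neg[OF lin, of D] by simp
    have "(\<lambda>B. if B \<in> compact_operators then F B else 0) = f"
      by (rule fu[OF restrict_unit[OF F assms(3) T0]]) (use assms(3) F(2) in simp)
    then have FC: "F C = f C" using CK by (metis (mono_tags))
    have "F A = F (C + D)" unfolding D_def by simp
    also have "\<dots> = F C + F D" using lin unfolding lin_on_def by blast
    finally show ?thesis using FD FC unfolding C_def by simp
  qed
  obtain G where G: "unit_functional_on UNIV G" "G T = norm T"
    using extend_unit[OF f assms(3) T0] by blast
  have "F = G" if "unit_functional_on UNIV F" "F T = norm T" for F
    using val[OF that] val[OF G] by (intro ext) simp
  then have "\<exists>!F. unit_functional_on (UNIV :: ('a \<Rightarrow>\<^sub>L 'b) set) F \<and> F T = norm T" using G by blast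
  then show "smooth_point_in (UNIV :: ('a \<Rightarrow>\<^sub>L 'b) set) T"
    unfolding smooth_point_in_def using T0 by blast
qed

end
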